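(* Let $T_1$ be a quadtree in $\mathbb{R}^d$ and let $j \ge 1$. Given the set of cells $T_j$ with brand $j$ (as in the construction of the extended quadtree described in the context), the set $T_{j+1}$ of cells that balance the cells of $T_j$ is unique.
   Context: A quadtree on an axis-aligned root hypercube $R\subset\mathbb{R}^d$ is a hierarchical decomposition in which every node has an associated axis-aligned hypercube (cell) and is either a leaf or has $2^d$ equal-sized children whose cells subdivide its cell. The size $|C|$ of a cell is its edge length. Two cells are neighbors if they are interior-disjoint and share (part of) a $(d-1)$-dimensional facet. For an integer $j$, a cell $C$ is $2^j$-smooth if every leaf neighboring $C$ has size at most $2^j|C|$. Extended quadtree: the cells of a given quadtree $T_1$ are called true cells and get brand $1$. Recursively, for $j\ge1$, let $T^j$ be the quadtree formed by $\bigcup_{i\le j}T_i$, and let $T_{j+1}$ be the minimal set of cells obtained by splitting cells of $T^j$ such that every cell of $T_j$ is $2^j$-smooth in the resulting quadtree; the cells of $T_{j+1}$ get brand $j+1$. The extended quadtree is $T^*=T^{d+1}$. *)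

theory Defs
  imports Complex_Main
begin

text \<open>Dyadic cells of the root hypercube R, which (by scale/translation invariance)
is taken to be the unit cube [0,1]^d.  The dimension d is the cardinality of the
finite index type 'd.  A cell (k, c) is the closed cube with edge length 2^-k and
i-th coordinate range [c i / 2^k, (c i + 1) / 2^k].\<close>

type_synonym 'd cell = "nat \<times> ('d \<Rightarrow> nat)"

definition valid_cell :: "'d::finite cell \<Rightarrow> bool" where
  "valid_cell C \<longleftrightarrow> (\<forall>i. snd C i < 2 ^ fst C)"

definition root_cell :: "'d::finite cell" where
  "root_cell = (0, (\<lambda>_. 0))"

definition children :: "'d::finite cell \<Rightarrow> 'd cell set" where
  "children C = {(Suc (fst C), c') | c'. \<forall>i. c' i = 2 * snd C i \<or> c' i = 2 * snd C i + 1}"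

definition cell_size :: "'d::finite cell \<Rightarrow> real" where
  "cell_size C = 1 / 2 ^ fst C"

definition cell_lo :: "'d::finite cell \<Rightarrow> 'd \<Rightarrow> real" where
  "cell_lo C i = real (snd C i) / 2 ^ fst C"

definition cell_hi :: "'d::finite cell \<Rightarrow> 'd \<Rightarrow> real" where
  "cell_hi C i = real (snd C i + 1) / 2 ^ fst C"

definition quadtree :: "'d::finite cell set \<Rightarrow> bool" where
  "quadtree Q \<longleftrightarrow> finite Q \<and> root_cell \<in> Q \<and> (\<forall>C\<in>Q. valid_cell C)
     \<and> (\<forall>C\<in>Q. children C \<subseteq> Q \<or> children C \<inter> Q = {})
     \<and> (\<forall>C\<in>Q. C \<noteq> root_cell \<longrightarrow> (\<exists>P\<in>Q. C \<in> children P))"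

definition leaf :: "'d::finite cell set \<Rightarrow> 'd cell \<Rightarrow> bool" where
  "leaf Q C \<longleftrightarrow> C \<in> Q \<and> children C \<inter> Q = {}"

text \<open>Neighbors: interior-disjoint and sharing a (d-1)-dimensional part of a facet:
the closed boxes touch along one coordinate and their open ranges overlap in all
other coordinates.\<close>
definition neighbors :: "'d::finite cell \<Rightarrow> 'd cell \<Rightarrow> bool" where
  "neighbors C D \<longleftrightarrow> (\<exists>i. (cell_hi C i = cell_lo D i \<or> cell_hi D i = cell_lo C i)
      \<and> (\<forall>l. l \<noteq> i \<longrightarrow> cell_lo C l < cell_hi D l \<and> cell_lo D l < cell_hi C l))"

definition smooth :: "'d::finite cell set \<Rightarrow> nat \<Rightarrow> 'd cell \<Rightarrow> bool" where
  "smooth Q j C \<longleftrightarrow> (\<forall>L. leaf Q L \<and> neighbors L C \<longrightarrow> cell_size L \<le> 2 ^ j * cell_size C)"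

definition balancing_set :: "'d::finite cell set \<Rightarrow> 'd cell set \<Rightarrow> nat \<Rightarrow> 'd cell set \<Rightarrow> bool" where
  "balancing_set Tup Tj j S \<longleftrightarrow> quadtree (Tup \<union> S) \<and> (\<forall>C\<in>Tj. smooth (Tup \<union> S) j C)"

definition minimal_balancing_set :: "'d::finite cell set \<Rightarrow> 'd cell set \<Rightarrow> nat \<Rightarrow> 'd cell set \<Rightarrow> bool" where
  "minimal_balancing_set Tup Tj j S \<longleftrightarrow> balancing_set Tup Tj j S
     \<and> (\<forall>S'. balancing_set Tup Tj j S' \<and> S' \<subseteq> S \<longrightarrow> S' = S)"

end

theory Submission
  imports Defs
begin

lemma children_nonempty: "(Suc (fst C), (\<lambda>i. 2 * snd C i)) \<in> children C"
  by (auto simp: children_def)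

lemma parent_unique:
  assumes "C \<in> children P" "C \<in> children P'" shows "P = P'"
proof -
  have a: "fst P = fst P'" using assms by (auto simp: children_def)
  have "snd P i = snd P' i" for i
  proof -
    from assms(1) obtain c where "C = (Suc (fst P), c)" "c i = 2 * snd P i \<or> c i = 2 * snd P i + 1"
      by (auto simp: children_def)
    moreover from assms(2) have "snd C i = 2 * snd P' i \<or> snd C i = 2 * snd P' i + 1"
      by (auto simp: children_def)
    ultimately show ?thesis by auto
  qed
  with a show ?thesis by (simp add: prod_eq_iff fun_eq_iff)
qed

lemma quadtree_inter:
  assumes "quadtree Q1" "quadtree Q2" shows "quadtree (Q1 \<inter> Q2)"
  unfolding quadtree_def
proof (intro conjI ballI impI)
  show "finite (Q1 \<inter> Q2)" using assms by (auto simp: quadtree_def)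
  show "root_cell \<in> Q1 \<inter> Q2" using assms by (auto simp: quadtree_def)
  fix C assume C: "C \<in> Q1 \<inter> Q2"
  show "valid_cell C" using assms C by (auto simp: quadtree_def)
  show "children C \<subseteq> Q1 \<inter> Q2 \<or> children C \<inter> (Q1 \<inter> Q2) = {}"
    using assms C unfolding quadtree_def by blast
  assume "C \<noteq> root_cell"
  then obtain P1 P2 where "P1 \<in> Q1" "C \<in> children P1" "P2 \<in> Q2" "C \<in> children P2"
    using assms C unfolding quadtree_def by blast
  then show "\<exists>P\<in>Q1 \<inter> Q2. C \<in> children P" using parent_unique by blast
qed

lemma leaf_inter:
  assumes "quadtree Q1" "quadtree Q2" "leaf (Q1 \<inter> Q2) L"
  shows "leaf Q1 L \<or> leaf Q2 L"
proof (rule ccontr)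
  assume "\<not> ?thesis"
  with assms have "children L \<subseteq> Q1" "children L \<subseteq> Q2"
    unfolding leaf_def quadtree_def by blast+
  with assms(3) children_nonempty[of L] show False unfolding leaf_def by blast
qed

lemma balancing_inter:
  assumes "balancing_set Tup Tj j S1" "balancing_set Tup Tj j S2"
  shows "balancing_set Tup Tj j (S1 \<inter> S2)"
proof -
  have eq: "Tup \<union> (S1 \<inter> S2) = (Tup \<union> S1) \<inter> (Tup \<union> S2)" by blast
  have q: "quadtree (Tup \<union> S1)" "quadtree (Tup \<union> S2)" using assms by (auto simp: balancing_set_def)
  show ?thesis
    unfolding balancing_set_def eq
  proof (intro conjI ballI)
    show "quadtree ((Tup \<union> S1) \<inter> (Tup \<union> S2))" using quadtree_inter q by blast
    fix C assume "C \<in> Tj"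
    then have "smooth (Tup \<union> S1) j C" "smooth (Tup \<union> S2) j C"
      using assms by (auto simp: balancing_set_def)
    then show "smooth ((Tup \<union> S1) \<inter> (Tup \<union> S2)) j C"
      unfolding smooth_def using leaf_inter[OF q] by blast
  qed
qed

definition fullF :: "nat \<Rightarrow> 'd::finite cell set" where
  "fullF N = {C. valid_cell C \<and> fst C \<le> N}"

lemma finite_fullF: "finite (fullF N :: 'd::finite cell set)"
proof -
  have "fullF N \<subseteq> {..N} \<times> {c :: 'd \<Rightarrow> nat. \<forall>x. (x \<in> UNIV \<longrightarrow> c x \<in> {..<2^N}) \<and> (x \<notin> UNIV \<longrightarrow> c x = 0)}"
  proof
    fix C :: "'d cell" assume "C \<in> fullF N"
    then have "valid_cell C" "fst C \<le> N" by (auto simp: fullF_def)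
    moreover have "(2::nat) ^ fst C \<le> 2 ^ N" using \<open>fst C \<le> N\<close> by (simp add: power_increasing)
    ultimately show "C \<in> {..N} \<times> {c. \<forall>x. (x \<in> UNIV \<longrightarrow> c x \<in> {..<2^N}) \<and> (x \<notin> UNIV \<longrightarrow> c x = 0)}"
      by (cases C) (auto simp: valid_cell_def intro: less_le_trans)
  qed
  moreover have "finite ({..N} \<times> {c :: 'd \<Rightarrow> nat. \<forall>x. (x \<in> UNIV \<longrightarrow> c x \<in> {..<2^N}) \<and> (x \<notin> UNIV \<longrightarrow> c x = 0)})"
    by (intro finite_cartesian_product finite_set_of_finite_funs) auto
  ultimately show ?thesis by (rule finite_subset)
qed

lemma quadtree_fullF: "quadtree (fullF N :: 'd::finite cell set)"
  unfolding quadtree_def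
proof (intro conjI ballI impI)
  show "finite (fullF N :: 'd cell set)" by (rule finite_fullF)
  show "root_cell \<in> (fullF N :: 'd cell set)" by (simp add: fullF_def root_cell_def valid_cell_def)
  fix C :: "'d cell" assume C: "C \<in> fullF N"
  then have v: "valid_cell C" and d: "fst C \<le> N" by (auto simp: fullF_def)
  show "valid_cell C" by (rule v)
  show "children C \<subseteq> fullF N \<or> children C \<inter> fullF N = {}"
  proof (cases "fst C < N")
    case True
    have "children C \<subseteq> fullF N"
    proof
      fix D assume "D \<in> children C"
      then obtain c' where D: "D = (Suc (fst C), c')" and h: "\<forall>i. c' i = 2 * snd C i \<or> c' i = 2 * snd C i + 1"
        by (auto simp: children_def)
      have "c' i < 2 ^ Suc (fst C)" for i
      proof -
        have "snd C i < 2 ^ fst C" using v by (simp add: valid_cell_def)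
        then have "2 * snd C i + 1 < 2 * 2 ^ fst C" by linarith
        then show ?thesis using h[rule_format, of i] by auto
      qed
      then show "D \<in> fullF N" using True D by (auto simp: fullF_def valid_cell_def)
    qed
    then show ?thesis by blast
  next
    case False
    then show ?thesis by (auto simp: children_def fullF_def)
  qed
  assume nr: "C \<noteq> root_cell"
  obtain k c where Cd: "C = (k, c)" by (cases C)
  show "\<exists>P\<in>fullF N. C \<in> children P"
  proof (cases k)
    case 0
    then have "c = (\<lambda>_. 0)" using v Cd by (auto simp: valid_cell_def fun_eq_iff)
    with 0 Cd nr show ?thesis by (simp add: root_cell_def)
  next
    case (Suc m)
    let ?P = "(m, \<lambda>i. c i div 2)"
    have "c i div 2 < 2 ^ m" for i using v Cd Suc by (auto simp: valid_cell_def less_mult_imp_div_less mult.commute)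
    then have "?P \<in> fullF N" using d Cd Suc by (auto simp: fullF_def valid_cell_def)
    moreover have "C \<in> children ?P" using Cd Suc by (auto simp: children_def)
    ultimately show ?thesis by blast
  qed
qed

theorem lemma12:
  fixes T :: "nat \<Rightarrow> 'd::finite cell set" and j :: nat
  assumes "quadtree (T 1)"
    and "j \<ge> 1"
    and "\<And>i. 1 \<le> i \<Longrightarrow> i < j \<Longrightarrow>
           minimal_balancing_set (\<Union>l\<in>{1..i}. T l) (T i) i (T (Suc i))"
  shows "\<exists>!S. minimal_balancing_set (\<Union>l\<in>{1..j}. T l) (T j) j S"
proof -
  define Tup where "Tup = (\<Union>l\<in>{1..j}. T l)"
  have qT: "quadtree Tup"
  proof (cases "j = 1")
    case True then show ?thesis using assms(1) by (simp add: Tup_def)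
  next
    case False
    then obtain i where i: "j = Suc i" "1 \<le> i" using assms(2) by (cases j) auto
    have "{1..j} = insert (Suc i) {1..i}" using i by auto
    then have "Tup = (\<Union>l\<in>{1..i}. T l) \<union> T (Suc i)" by (auto simp: Tup_def)
    with assms(3)[of i] i show ?thesis by (simp add: minimal_balancing_set_def balancing_set_def)
  qed
  have sub: "T j \<subseteq> Tup" using assms(2) by (auto simp: Tup_def)
  define N where "N = Max (fst ` Tup)"
  have finT: "finite Tup" using qT by (simp add: quadtree_def)
  have TF: "Tup \<subseteq> fullF N"
  proof
    fix C assume "C \<in> Tup"
    then show "C \<in> fullF N" using qT finT by (auto simp: fullF_def quadtree_def N_def)
  qed
  have balF: "balancing_set Tup (T j) j (fullF N)"
    unfolding balancing_set_def
  proof (intro conjI ballI)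
    have eq: "Tup \<union> fullF N = fullF N" using TF by blast
    show "quadtree (Tup \<union> fullF N)" unfolding eq by (rule quadtree_fullF)
    fix C assume "C \<in> T j"
    then have "C \<in> Tup" using sub by blast
    then have dC: "fst C \<le> N" using finT by (auto simp: N_def)
    show "smooth (Tup \<union> fullF N) j C" unfolding smooth_def eq
    proof (intro allI impI)
      fix L assume "leaf (fullF N) L \<and> neighbors L C"
      then have L: "L \<in> fullF N" "children L \<inter> fullF N = {}" by (auto simp: leaf_def)
      have "fst L = N"
      proof (rule ccontr)
        assume "fst L \<noteq> N"
        then have lt: "fst L < N" using L by (auto simp: fullF_def)
        have "(Suc (fst L), (\<lambda>i. 2 * snd L i)) \<in> fullF N"
          using L lt by (auto simp: fullF_def valid_cell_def)
        with children_nonempty[of L] L show False by blast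
      qed
      have "(2::real) ^ fst C \<le> 2 ^ N" using dC by (simp add: power_increasing)
      then have "1 / (2::real) ^ N \<le> 1 / 2 ^ fst C" by (simp add: frac_le)
      also have "\<dots> \<le> 2 ^ j * (1 / 2 ^ fst C)" by (simp add: field_simps)
      finally show "cell_size L \<le> 2 ^ j * cell_size C"
        using \<open>fst L = N\<close> by (simp add: cell_size_def)
    qed
  qed
  obtain S where S: "balancing_set Tup (T j) j S \<and> S \<subseteq> fullF N"
    and Smin: "\<And>S'. balancing_set Tup (T j) j S' \<and> S' \<subseteq> fullF N \<Longrightarrow> card S \<le> card S'"
    using ex_has_least_nat[of "\<lambda>S. balancing_set Tup (T j) j S \<and> S \<subseteq> fullF N" "fullF N" card] balF
    by blast
  have finS: "finite S" using S finite_fullF finite_subset by blast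
  have mS: "minimal_balancing_set Tup (T j) j S"
    unfolding minimal_balancing_set_def
  proof (intro conjI allI impI)
    show "balancing_set Tup (T j) j S" using S by blast
    fix S' assume h: "balancing_set Tup (T j) j S' \<and> S' \<subseteq> S"
    then have "card S \<le> card S'" using Smin S by blast
    then show "S' = S" using h finS card_subset_eq by (metis card_mono le_antisym)
  qed
  have uniq: "S1 = S2" if "minimal_balancing_set Tup (T j) j S1" "minimal_balancing_set Tup (T j) j S2" for S1 S2
  proof -
    have b: "balancing_set Tup (T j) j (S1 \<inter> S2)"
      using that balancing_inter by (auto simp: minimal_balancing_set_def)
    have "S1 \<inter> S2 = S1" using that(1) b by (auto simp: minimal_balancing_set_def)
    moreover have "S1 \<inter> S2 = S2" using that(2) b by (auto simp: minimal_balancing_set_def)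
    ultimately show ?thesis by simp
  qed
  show ?thesis unfolding Tup_def[symmetric] using mS uniq by blast
qed

end
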